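(* Let $\varphi=\frac{1+\sqrt5}{2}$, $F_n=\frac{\varphi^n-(-1/\varphi)^n}{\varphi+1/\varphi}$, $F_0!=1$, $F_n!=F_1\cdots F_n$. Define $$e_F^x=\sum_{n=0}^\infty\frac{x^n}{F_n!},\qquad E_F^x=\sum_{n=0}^\infty(-1)^{\frac{n(n-1)}2}\frac{x^n}{F_n!}.$$ Then both series define entire functions of $x$, and for every constant $k$ and every $x\ne0$, $$D_Fe_F^{kx}=k\,e_F^{kx},\qquad D_FE_F^{kx}=k\,E_F^{-kx},$$ where $D_Ff(x)=\frac{f(\varphi x)-f(-x/\varphi)}{(\varphi+\frac1\varphi)x}$.
   Context: $D_F$ is the Golden derivative; $e_F^{kx}$ means $e_F^{y}$ evaluated at $y=kx$, and similarly for $E_F$. *)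

theory Defs
  imports "HOL-Analysis.Analysis"
begin

definition golden :: real where
  "golden = (1 + sqrt 5) / 2"

definition fibF :: "nat \<Rightarrow> real" where
  "fibF n = (golden ^ n - (- 1 / golden) ^ n) / (golden + 1 / golden)"

definition fibfact :: "nat \<Rightarrow> real" where
  "fibfact n = (\<Prod>i=1..n. fibF i)"

definition eF :: "complex \<Rightarrow> complex" where
  "eF x = (\<Sum>n. x ^ n / complex_of_real (fibfact n))"

definition EF :: "complex \<Rightarrow> complex" where
  "EF x = (\<Sum>n. (-1) ^ (n * (n - 1) div 2) * x ^ n / complex_of_real (fibfact n))"

definition DF :: "(complex \<Rightarrow> complex) \<Rightarrow> complex \<Rightarrow> complex" where
  "DF f x = (f (complex_of_real golden * x) - f (- x / complex_of_real golden))
            / (complex_of_real (golden + 1 / golden) * x)"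

end

theory Submission
  imports Defs
begin

lemma golden_pos: "golden > 0"
proof -
  have "sqrt 5 \<ge> 0" by simp
  hence "1 + sqrt 5 > 0" by linarith
  thus ?thesis unfolding golden_def by simp
qed

lemma golden_sq: "golden^2 = golden + 1"
  unfolding golden_def by (simp add: power2_eq_square field_simps)

lemma psi_sq: "(-1/golden)^2 = (-1/golden) + 1"
proof -
  have "golden * (golden - 1) = 1" using golden_sq by (simp add: power2_eq_square algebra_simps)
  hence "1/golden = golden - 1" using golden_pos by (simp add: field_simps)
  hence eq: "-1/golden = 1 - golden" by (simp add: minus_divide_left[symmetric])
  have h: "golden*golden = golden+1" using golden_sq by (simp add: power2_eq_square)
  have "(1-golden)^2 = 1 - 2*golden + golden*golden" by (simp add: power2_eq_square algebra_simps)
  hence "(1-golden)^2 = (1 - golden) + 1" using h by linarith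
  thus ?thesis unfolding eq .
qed

lemma s_pos: "golden + 1/golden > 0" using golden_pos by (smt (verit) divide_pos_pos)

lemma fibF_0: "fibF 0 = 0" by (simp add: fibF_def)
lemma fibF_1: "fibF 1 = 1"
  using s_pos by (simp add: fibF_def)

lemma fibF_rec: "fibF (Suc (Suc n)) = fibF (Suc n) + fibF n"
proof -
  have "golden^(Suc (Suc n)) = golden^n * golden^2"
    by (metis power_add add_2_eq_Suc')
  hence a: "golden^(Suc (Suc n)) = golden^(Suc n) + golden^n"
    using golden_sq by (simp add: algebra_simps)
  have b: "(-1/golden)^(Suc (Suc n)) = (-1/golden)^(Suc n) + (-1/golden)^n"
  proof -
    have "(-1/golden)^(Suc (Suc n)) = (-1/golden)^n * (-1/golden)^2"
      by (metis power_add add_2_eq_Suc')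
    also have "\<dots> = (-1/golden)^n * ((-1/golden) + 1)" by (simp only: psi_sq)
    also have "\<dots> = (-1/golden)^(Suc n) + (-1/golden)^n" by (simp only: distrib_left mult_1_right power_Suc2)
    finally show ?thesis .
  qed
  show ?thesis unfolding fibF_def a b by (simp add: diff_divide_distrib add_divide_distrib)
qed

lemma fibF_grow: "fibF (Suc n) \<ge> 1 \<and> fibF (Suc (Suc n)) \<ge> 1 \<and> fibF (Suc (Suc n)) \<ge> real (Suc (Suc n)) / 2"
proof (induction n)
  case 0 thus ?case using fibF_rec[of 0] fibF_0 fibF_1 by simp
next
  case (Suc n) thus ?case using fibF_rec[of "Suc n"] by simp
qed

lemma fibF_Suc_ge: "fibF (Suc n) \<ge> real (Suc n) / 2"
  using fibF_grow[of n] fibF_grow[of "n - 1"] fibF_1 by (cases n) auto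

lemma fibF_Suc_pos: "fibF (Suc n) > 0"
proof -
  have "real (Suc n)/2 > 0" by simp
  thus ?thesis using fibF_Suc_ge[of n] by linarith
qed

lemma fibfact_Suc: "fibfact (Suc n) = fibfact n * fibF (Suc n)"
  unfolding fibfact_def by (simp add: prod.nat_ivl_Suc')

lemma fibfact_pos: "fibfact n > 0"
  by (induction n) (auto simp: fibfact_Suc fibfact_def[of 0] fibF_Suc_pos)

lemma real_summable: assumes "r \<ge> 0" shows "summable (\<lambda>n. r^n / fibfact n)"
proof (rule summable_ratio_test[where c="1/2" and N="nat \<lceil>4*r\<rceil>"])
  fix n assume n: "nat \<lceil>4*r\<rceil> \<le> n"
  have fp: "fibfact n > 0" by (rule fibfact_pos)
  have fs: "fibF (Suc n) > 0" by (rule fibF_Suc_pos)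
  have "4*r \<le> real n" using n by (metis of_nat_mono real_nat_ceiling_ge order_trans)
  hence "r \<le> fibF (Suc n) / 2" using fibF_Suc_ge[of n] by simp
  hence "r * (r^n / fibfact n) \<le> fibF (Suc n) / 2 * (r^n / fibfact n)"
    using assms fp by (intro mult_right_mono) auto
  thus "norm (r ^ Suc n / fibfact (Suc n)) \<le> 1/2 * norm (r^n / fibfact n)"
    using assms fp fs by (simp add: fibfact_Suc field_simps)
qed simp

lemma cplx_summable:
  fixes x :: complex and a :: "nat \<Rightarrow> complex"
  assumes "\<And>n. norm (a n) = 1"
  shows "summable (\<lambda>n. a n * x ^ n / complex_of_real (fibfact n))"
proof (rule summable_comparison_test)
  show "summable (\<lambda>n. norm x ^ n / fibfact n)" by (rule real_summable) simp
  show "\<exists>N. \<forall>n\<ge>N. norm (a n * x ^ n / complex_of_real (fibfact n)) \<le> norm x ^ n / fibfact n"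
    using assms fibfact_pos by (intro exI[of _ 0]) (simp add: norm_mult norm_divide norm_power abs_of_pos)
qed

lemma parity: "Suc m * (Suc m - 1) div 2 = m * (m - 1) div 2 + m"
proof -
  have "Suc m * (Suc m - 1) = m * (m - 1) + 2 * m" by (cases m) (simp_all add: algebra_simps)
  thus ?thesis by simp
qed

lemma powser_holo:
  fixes c :: "nat \<Rightarrow> complex"
  assumes "\<And>y. summable (\<lambda>n. c n * y ^ n)"
  shows "(\<lambda>x. \<Sum>n. c n * x^n) holomorphic_on UNIV"
  unfolding holomorphic_on_def field_differentiable_def
  using termdiffs_strong_converges_everywhere[OF assms] by blast

lemma DF_series:
  fixes c :: "nat \<Rightarrow> complex" and S :: "complex \<Rightarrow> complex"
  assumes summ: "\<And>y. summable (\<lambda>n. c n * y ^ n)" and Sd: "\<And>y. S y = (\<Sum>n. c n * y^n)"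
  shows "(\<lambda>n. c n * (k*x)^n * complex_of_real (fibF n * (golden + 1/golden)))
          sums (S (k * (complex_of_real golden * x)) - S (k * (- x / complex_of_real golden)))"
proof -
  have g0: "golden \<noteq> 0" using golden_pos by simp
  have s0: "golden + 1/golden \<noteq> 0" using s_pos by simp
  have 1: "(\<lambda>n. c n * (k * (complex_of_real golden * x))^n - c n * (k * (- x / complex_of_real golden))^n)
     sums (S (k * (complex_of_real golden * x)) - S (k * (- x / complex_of_real golden)))"
    unfolding Sd by (intro sums_diff summable_sums summ)
  have fs: "fibF n * (golden + 1/golden) = golden^n - (-1/golden)^n" for n
    unfolding fibF_def using s0 by simp
  have "c n * (k * (complex_of_real golden * x))^n - c n * (k * (- x / complex_of_real golden))^n
      = c n * (k*x)^n * complex_of_real (fibF n * (golden + 1/golden))" for n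
  proof -
    have "k * (- x / complex_of_real golden) = (k*x) * complex_of_real (-1/golden)"
      by simp
    hence "(k * (- x / complex_of_real golden))^n = (k*x)^n * complex_of_real ((-1/golden)^n)"
      by (simp only: power_mult_distrib of_real_power)
    moreover have "(k * (complex_of_real golden * x))^n = (k*x)^n * complex_of_real (golden^n)"
      by (simp only: power_mult_distrib of_real_power mult.commute mult.left_commute)
    ultimately show ?thesis unfolding fs by (simp add: algebra_simps)
  qed
  with 1 show ?thesis by simp
qed

theorem mainTheorem8:
  shows "(\<forall>x. summable (\<lambda>n. x ^ n / complex_of_real (fibfact n)))
       \<and> (\<forall>x. summable (\<lambda>n. (-1) ^ (n * (n - 1) div 2) * x ^ n / complex_of_real (fibfact n)))
       \<and> eF holomorphic_on UNIV \<and> EF holomorphic_on UNIV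
       \<and> (\<forall>k x. x \<noteq> 0 \<longrightarrow>
            DF (\<lambda>y. eF (k * y)) x = k * eF (k * x)
          \<and> DF (\<lambda>y. EF (k * y)) x = k * EF (- k * x))"
proof -
  define c1 where "c1 n = 1 / complex_of_real (fibfact n)" for n
  define c2 where "c2 n = (-1) ^ (n * (n - 1) div 2) / complex_of_real (fibfact n)" for n
  have A: "summable (\<lambda>n. x ^ n / complex_of_real (fibfact n))" for x
    using cplx_summable[of "\<lambda>_. 1" x] by simp
  have B: "summable (\<lambda>n. (-1) ^ (n * (n - 1) div 2) * x ^ n / complex_of_real (fibfact n))" for x :: complex
    by (rule cplx_summable) (simp add: norm_power)
  have e1: "c1 n * y^n = y ^ n / complex_of_real (fibfact n)" for n y
    by (simp add: c1_def)
  have e2: "c2 n * y^n = (-1) ^ (n * (n - 1) div 2) * y ^ n / complex_of_real (fibfact n)" for n y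
    by (simp add: c2_def)
  have s1: "summable (\<lambda>n. c1 n * y ^ n)" for y unfolding e1 by (rule A)
  have s2: "summable (\<lambda>n. c2 n * y ^ n)" for y unfolding e2 by (rule B)
  have E1: "eF y = (\<Sum>n. c1 n * y^n)" for y unfolding e1 eF_def ..
  have E2: "EF y = (\<Sum>n. c2 n * y^n)" for y unfolding e2 EF_def ..
  have H1: "eF holomorphic_on UNIV"
  proof -
    have "eF = (\<lambda>y. \<Sum>n. c1 n * y^n)" using E1 by blast
    thus ?thesis using powser_holo[OF s1] by simp
  qed
  have H2: "EF holomorphic_on UNIV"
  proof -
    have "EF = (\<lambda>y. \<Sum>n. c2 n * y^n)" using E2 by blast
    thus ?thesis using powser_holo[OF s2] by simp
  qed
  define s where "s = golden + 1/golden"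
  have s0: "s \<noteq> 0" using s_pos s_def by simp
  have ff: "fibF (Suc m) \<noteq> 0" for m using fibF_Suc_pos[of m] by simp
  have fp: "fibfact m \<noteq> 0" for m using fibfact_pos[of m] by simp
  have D: "DF (\<lambda>y. eF (k * y)) x = k * eF (k * x) \<and> DF (\<lambda>y. EF (k * y)) x = k * EF (- k * x)"
    if x0: "x \<noteq> 0" for k x :: complex
  proof
    let ?f = "\<lambda>n. c1 n * (k*x)^n * complex_of_real (fibF n * s)"
    have S: "?f sums (eF (k * (complex_of_real golden * x)) - eF (k * (- x / complex_of_real golden)))"
      using DF_series[OF s1 E1, of k x] unfolding s_def .
    have "(\<lambda>m. ?f (Suc m)) = (\<lambda>m. (complex_of_real s * k * x) * (c1 m * (k*x)^m))"
      using ff fp by (auto simp: c1_def fibfact_Suc field_simps)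
    moreover have "(\<lambda>m. (complex_of_real s * k * x) * (c1 m * (k*x)^m)) sums ((complex_of_real s * k * x) * eF (k*x))"
      unfolding E1 by (intro sums_mult summable_sums s1)
    ultimately have "?f sums ((complex_of_real s * k * x) * eF (k*x))"
      using sums_Suc_iff[of ?f] by (simp add: fibF_0)
    hence eq: "eF (k * (complex_of_real golden * x)) - eF (k * (- x / complex_of_real golden)) = (complex_of_real s * k * x) * eF (k*x)"
      using S sums_unique2 by blast
    show "DF (\<lambda>y. eF (k * y)) x = k * eF (k * x)"
      unfolding DF_def eq s_def[symmetric] using s0 x0 by (simp add: field_simps)
  next
    let ?f = "\<lambda>n. c2 n * (k*x)^n * complex_of_real (fibF n * s)"
    have S: "?f sums (EF (k * (complex_of_real golden * x)) - EF (k * (- x / complex_of_real golden)))"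
      using DF_series[OF s2 E2, of k x] unfolding s_def .
    have pm: "(-1::complex) ^ (Suc m * (Suc m - 1) div 2) = (-1) ^ (m * (m - 1) div 2) * (-1)^m" for m
      unfolding parity by (simp add: power_add)
    have "(\<lambda>m. ?f (Suc m)) = (\<lambda>m. (complex_of_real s * k * x) * (c2 m * (-k*x)^m))"
    proof
      fix m
      have "(-k*x)^m = (-1)^m * (k*x)^m" by (simp add: power_mult_distrib[symmetric])
      thus "?f (Suc m) = (complex_of_real s * k * x) * (c2 m * (-k*x)^m)"
        using ff fp pm[of m] by (simp add: c2_def fibfact_Suc field_simps)
    qed
    moreover have "(\<lambda>m. (complex_of_real s * k * x) * (c2 m * (-k*x)^m)) sums ((complex_of_real s * k * x) * EF (-k*x))"
      unfolding E2 by (intro sums_mult summable_sums s2)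
    ultimately have "?f sums ((complex_of_real s * k * x) * EF (-k*x))"
      using sums_Suc_iff[of ?f] by (simp add: fibF_0)
    hence eq: "EF (k * (complex_of_real golden * x)) - EF (k * (- x / complex_of_real golden)) = (complex_of_real s * k * x) * EF (-k*x)"
      using S sums_unique2 by blast
    show "DF (\<lambda>y. EF (k * y)) x = k * EF (- k * x)"
      unfolding DF_def eq s_def[symmetric] using s0 x0 by (simp add: field_simps)
  qed
  have D1: "\<forall>k x. x \<noteq> 0 \<longrightarrow> DF (\<lambda>y. eF (k * y)) x = k * eF (k * x) \<and> DF (\<lambda>y. EF (k * y)) x = k * EF (- k * x)"
    using D by blast
  have A1: "\<forall>x. summable (\<lambda>n. x ^ n / complex_of_real (fibfact n))" by (intro allI A)
  have B1: "\<forall>x. summable (\<lambda>n. (-1) ^ (n * (n - 1) div 2) * x ^ n / complex_of_real (fibfact n))" by (intro allI B)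
  show ?thesis by (rule conjI[OF A1 conjI[OF B1 conjI[OF H1 conjI[OF H2 D1]]]])
qed

end
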